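(* Let $R$ be an idempotent semiring finitely generated by a finite set $R_0$, let $B$ be an $R$-semimodule finitely generated by a finite set $B_0$, and let $n\ge2$. Let $\alpha:\Omega_n^*\to(R,\cdot,1)$ be a monoid morphism such that for some $b_0,b_1\in B$ and all $w\in\Omega_n^*$: $\alpha(w)\cdot b_0\ge b_1$ iff $w\in\mathcal D_n$. Suppose moreover that $b_1$ satisfies: for all $c_1,c_2\in B$, if $c_1+c_2\ge b_1$ then $c_1\ge b_1$ or $c_2\ge b_1$. Then for every context-free language $\mathcal L\subseteq A^*$ there exist a weighted $\mathbb T_R$-automaton $M$ with output semimodule $B$ and a state $x_0$ such that $\mathcal L=\{w\in A^*\mid \llbracket x_0\rrbracket_M(w)\ge b_1\}$.
   Context: $A$ is a finite input alphabet. For a semiring $R$, the semimodule monad $\mathbb T_R$ sends $X$ to the free left $R$-semimodule on $X$ (finitely supported maps $X\to R$, i.e. formal sums $r_1x_1+\dots+r_kx_k$); its algebras are left $R$-semimodules. If $R$ is idempotent ($1+1=1$), a semimodule $B$ is partially ordered by $b\le c$ iff $b+c=c$. $\Omega_n=\{(_1,)_1,\dots,(_n,)_n\}$ and $\mathcal D_n\subseteq\Omega_n^*$ is the Dyck language of balanced parenthesis words. A weighted $\mathbb T_R$-automaton consists of a finite set $X$ and maps $o:X\to B$, $t:A\times X\to\mathbb T_R X$; its trace semantics $\llbracket x\rrbracket_M:A^*\to B$ is $\llbracket x\rrbracket_M(w)=o(\partial_w(\eta(x)))$ where $\mathbb T_RX$ is made an $L$-coalgebra ($LY=B\times Y^A$)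 by the unique semimodule morphism $\mathbb T_RX\to B\times(\mathbb T_RX)^A$ extending $x\mapsto(o(x),\lambda a.t(a,x))$; explicitly $\llbracket x\rrbracket_M(\epsilon)=o(x)$ and $\llbracket x\rrbracket_M(au)=\sum_y t(a,x)(y)\cdot\llbracket y\rrbracket_M(u)$. *)

theory Defs
  imports Main
begin

inductive_set gen_semiring :: "'r::semiring_1 set \<Rightarrow> 'r set" for R0 :: "'r set" where
  gs_base: "r \<in> R0 \<Longrightarrow> r \<in> gen_semiring R0"
| gs_zero: "0 \<in> gen_semiring R0"
| gs_one: "1 \<in> gen_semiring R0"
| gs_add: "r \<in> gen_semiring R0 \<Longrightarrow> s \<in> gen_semiring R0 \<Longrightarrow> r + s \<in> gen_semiring R0"
| gs_mult: "r \<in> gen_semiring R0 \<Longrightarrow> s \<in> gen_semiring R0 \<Longrightarrow> r * s \<in> gen_semiring R0"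

definition semimodule :: "('r::semiring_1 \<Rightarrow> 'b::comm_monoid_add \<Rightarrow> 'b) \<Rightarrow> bool" where
  "semimodule act \<longleftrightarrow>
     (\<forall>r s b. act (r * s) b = act r (act s b)) \<and>
     (\<forall>b. act 1 b = b) \<and>
     (\<forall>r s b. act (r + s) b = act r b + act s b) \<and>
     (\<forall>r b c. act r (b + c) = act r b + act r c) \<and>
     (\<forall>b. act 0 b = 0) \<and>
     (\<forall>r. act r 0 = 0)"

inductive_set gen_semimodule :: "('r \<Rightarrow> 'b::comm_monoid_add \<Rightarrow> 'b) \<Rightarrow> 'b set \<Rightarrow> 'b set"
  for act :: "'r \<Rightarrow> 'b \<Rightarrow> 'b" and B0 :: "'b set" where
  gm_base: "b \<in> B0 \<Longrightarrow> b \<in> gen_semimodule act B0"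
| gm_zero: "0 \<in> gen_semimodule act B0"
| gm_add: "b \<in> gen_semimodule act B0 \<Longrightarrow> c \<in> gen_semimodule act B0 \<Longrightarrow> b + c \<in> gen_semimodule act B0"
| gm_act: "b \<in> gen_semimodule act B0 \<Longrightarrow> act r b \<in> gen_semimodule act B0"

definition leqB :: "'b::comm_monoid_add \<Rightarrow> 'b \<Rightarrow> bool" where
  "leqB b c \<longleftrightarrow> b + c = c"

datatype paren = Op nat | Cl nat

definition Omega :: "nat \<Rightarrow> paren set" where
  "Omega n = {Op i | i. 1 \<le> i \<and> i \<le> n} \<union> {Cl i | i. 1 \<le> i \<and> i \<le> n}"

inductive_set Dyck :: "nat \<Rightarrow> paren list set" for n :: nat where
  dyck_nil: "[] \<in> Dyck n"
| dyck_wrap: "1 \<le> i \<Longrightarrow> i \<le> n \<Longrightarrow> u \<in> Dyck n \<Longrightarrow> v \<in> Dyck n \<Longrightarrow>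
     (Op i # u @ [Cl i]) @ v \<in> Dyck n"

definition monoid_morph :: "nat \<Rightarrow> (paren list \<Rightarrow> 'r::monoid_mult) \<Rightarrow> bool" where
  "monoid_morph n \<alpha> \<longleftrightarrow> \<alpha> [] = 1 \<and>
     (\<forall>u \<in> lists (Omega n). \<forall>v \<in> lists (Omega n). \<alpha> (u @ v) = \<alpha> u * \<alpha> v)"

text \<open>A grammar is a set of productions (nonterminal, right-hand side); nonterminals are
  natural numbers, terminals are letters of 'a.  derives P xs w: the sentential form xs
  derives the terminal word w.\<close>
inductive derives :: "(nat \<times> (nat + 'a) list) set \<Rightarrow> (nat + 'a) list \<Rightarrow> 'a list \<Rightarrow> bool"
  for P :: "(nat \<times> (nat + 'a) list) set" where
  der_nil: "derives P [] []"
| der_term: "derives P xs w \<Longrightarrow> derives P (Inr a # xs) (a # w)"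
| der_nt: "(N, rhs) \<in> P \<Longrightarrow> derives P rhs u \<Longrightarrow> derives P xs w \<Longrightarrow>
     derives P (Inl N # xs) (u @ w)"

definition cfl :: "'a list set \<Rightarrow> bool" where
  "cfl L \<longleftrightarrow> (\<exists>P S. finite P \<and> L = {w. derives P [Inl S] w})"

text \<open>A weighted T_R automaton with finite state set X, output o and transitions t,
  where t a x is the formal sum \<Sum> y\<in>X. (t a x y) y.  Trace semantics.\<close>
fun trace :: "('r \<Rightarrow> 'b::comm_monoid_add \<Rightarrow> 'b) \<Rightarrow> nat set \<Rightarrow> (nat \<Rightarrow> 'b)
    \<Rightarrow> ('a \<Rightarrow> nat \<Rightarrow> nat \<Rightarrow> 'r) \<Rightarrow> nat \<Rightarrow> 'a list \<Rightarrow> 'b" where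
  "trace act X out t x [] = out x"
| "trace act X out t x (a # u) = (\<Sum>y\<in>X. act (t a x y) (trace act X out t y u))"

end

theory Submission
  imports Defs
begin

lemma derives_nil_iff: "derives P [] w \<longleftrightarrow> w = []"
proof
  assume "derives P [] w" then show "w = []" by (cases rule: derives.cases) auto
qed (simp add: derives.der_nil)

lemma derives_append1:
  "derives P xs u \<Longrightarrow> derives P ys v \<Longrightarrow> derives P (xs @ ys) (u @ v)"
proof (induction rule: derives.induct)
  case der_nil then show ?case by simp
next
  case (der_term xs w a) then show ?case by (simp add: derives.der_term)
next
  case (der_nt N rhs u xs w) then show ?case
    using derives.der_nt[of N rhs P u "xs @ ys" "w @ v"] by simp
qed

lemma derives_append2:
  "derives P zs w \<Longrightarrow> zs = xs @ ys \<Longrightarrow> \<exists>u v. w = u @ v \<and> derives P xs u \<and> derives P ys v"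
proof (induction arbitrary: xs rule: derives.induct)
  case der_nil then show ?case by (simp add: derives.der_nil)
next
  case (der_term zs w a)
  show ?case
  proof (cases xs)
    case Nil
    have "derives P ys (a # w)" using der_term.prems Nil derives.der_term[OF der_term.hyps(1), of a] by simp
    then show ?thesis using Nil derives.der_nil[of P] by blast
  next
    case (Cons x xs')
    with der_term.prems have "x = Inr a" "zs = xs' @ ys" by auto
    with der_term.IH obtain u v where "w = u @ v" "derives P xs' u" "derives P ys v" by blast
    then show ?thesis using Cons \<open>x = Inr a\<close>
      by (intro exI[of _ "a # u"] exI[of _ v]) (auto intro: derives.der_term)
  qed
next
  case (der_nt N rhs u zs w)
  show ?case
  proof (cases xs)
    case Nil
    have "derives P ys (u @ w)" using der_nt.prems Nil derives.der_nt[OF der_nt.hyps(1,2,3)] by simp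
    then show ?thesis using Nil derives.der_nil[of P] by blast
  next
    case (Cons x xs')
    with der_nt.prems have "x = Inl N" "zs = xs' @ ys" by auto
    with der_nt.IH(2) obtain u' v where "w = u' @ v" "derives P xs' u'" "derives P ys v" by blast
    then show ?thesis using Cons \<open>x = Inl N\<close> der_nt
      by (intro exI[of _ "u @ u'"] exI[of _ v]) (auto intro: derives.der_nt)
  qed
qed

lemma derives_append_iff:
  "derives P (xs @ ys) w \<longleftrightarrow> (\<exists>u v. w = u @ v \<and> derives P xs u \<and> derives P ys v)"
proof
  assume "derives P (xs @ ys) w" then show "\<exists>u v. w = u @ v \<and> derives P xs u \<and> derives P ys v"
    using derives_append2 by blast
next
  assume "\<exists>u v. w = u @ v \<and> derives P xs u \<and> derives P ys v"
  then show "derives P (xs @ ys) w" using derives_append1 by blast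
qed

lemma derives_cons_iff:
  "derives P (x # xs) w \<longleftrightarrow> (\<exists>u v. w = u @ v \<and> derives P [x] u \<and> derives P xs v)"
  using derives_append_iff[of P "[x]" xs w] by simp

lemma derives_single_Inr: "derives P [Inr a] w \<longleftrightarrow> w = [a]"
proof
  assume "derives P [Inr a] w" then show "w = [a]"
    by (cases rule: derives.cases) (auto simp: derives_nil_iff)
next
  assume "w = [a]" then show "derives P [Inr a] w"
    using derives.der_term[OF derives.der_nil, of P a] by simp
qed

lemma derives_single_Inl: "derives P [Inl N] w \<longleftrightarrow> (\<exists>rhs. (N, rhs) \<in> P \<and> derives P rhs w)"
proof
  assume "derives P [Inl N] w"
  then show "\<exists>rhs. (N, rhs) \<in> P \<and> derives P rhs w"
    by (cases rule: derives.cases) (auto simp: derives_nil_iff)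
next
  assume "\<exists>rhs. (N, rhs) \<in> P \<and> derives P rhs w"
  then show "derives P [Inl N] w" using derives.der_nt[of N _ P w "[]" "[]"]
    by (auto intro: derives.der_nil)
qed

inductive lc :: "(nat \<times> (nat + 'a) list) set \<Rightarrow> nat + 'a \<Rightarrow> nat + 'a \<Rightarrow> 'a list \<Rightarrow> bool"
  for P :: "(nat \<times> (nat + 'a) list) set" where
  lc_refl: "lc P z z []"
| lc_step: "(N, al @ z # be) \<in> P \<Longrightarrow> derives P al [] \<Longrightarrow> derives P be u \<Longrightarrow> lc P (Inl N) t v
     \<Longrightarrow> lc P z t (u @ v)"

lemma lc_snoc:
  "lc P z t v \<Longrightarrow> (N, al @ t # be) \<in> P \<Longrightarrow> derives P al [] \<Longrightarrow> derives P be u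
   \<Longrightarrow> lc P z (Inl N) (v @ u)"
proof (induction rule: lc.induct)
  case (lc_refl z)
  then show ?case using lc.lc_step[of N al z be P u "Inl N" "[]"] lc.lc_refl by auto
next
  case (lc_step N' al' z be' u' t v)
  then show ?case using lc.lc_step[of N' al' z be' P u' "Inl N" "v @ u"] by auto
qed

lemma lc_derives: "lc P z t v \<Longrightarrow> derives P [z] x \<Longrightarrow> derives P [t] (x @ v)"
proof (induction arbitrary: x rule: lc.induct)
  case (lc_refl z) then show ?case by simp
next
  case (lc_step N al z be u t v)
  have "derives P (z # be) (x @ u)"
    using lc_step derives_append1[of P "[z]" x be u] by simp
  then have "derives P (al @ z # be) ([] @ x @ u)"
    using lc_step derives_append1 by blast
  then have "derives P [Inl N] (x @ u)" using lc_step derives_single_Inl by fastforce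
  then show ?case using lc_step.IH[of "x @ u"] by simp
qed

lemma lc_first:
  "derives P xs w \<Longrightarrow> w = a # w' \<Longrightarrow> \<exists>i w1 w2. i < length xs \<and> derives P (take i xs) [] \<and>
     lc P (Inr a) (xs ! i) w1 \<and> derives P (drop (Suc i) xs) w2 \<and> w' = w1 @ w2"
proof (induction arbitrary: w' rule: derives.induct)
  case der_nil then show ?case by simp
next
  case (der_term xs w b)
  then have "b = a" "w' = w" by auto
  then show ?case using der_term.hyps lc_refl[of P "Inr a"] derives.der_nil[of P]
    by (intro exI[of _ 0] exI[of _ "[]"] exI[of _ w]) simp
next
  case (der_nt N rhs u xs w)
  show ?case
  proof (cases u)
    case Nil
    with der_nt.prems der_nt.IH(2)[of w'] obtain i w1 w2 where
      h: "i < length xs" "derives P (take i xs) []" "lc P (Inr a) (xs ! i) w1"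
         "derives P (drop (Suc i) xs) w2" "w' = w1 @ w2" by auto
    have "derives P (take (Suc i) (Inl N # xs)) []"
      using derives.der_nt[OF der_nt.hyps(1), of "[]" "take i xs" "[]"] der_nt.hyps(2) Nil h(2) by simp
    then show ?thesis using h by (intro exI[of _ "Suc i"] exI[of _ w1] exI[of _ w2]) auto
  next
    case (Cons c u')
    with der_nt.prems have "c = a" "w' = u' @ w" by auto
    with Cons der_nt.IH(1)[of u'] obtain i w1 w2 where
      h: "i < length rhs" "derives P (take i rhs) []" "lc P (Inr a) (rhs ! i) w1"
         "derives P (drop (Suc i) rhs) w2" "u' = w1 @ w2" by auto
    have "(N, take i rhs @ rhs ! i # drop (Suc i) rhs) \<in> P"
      using der_nt.hyps(1) h(1) by (simp add: Cons_nth_drop_Suc)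
    from lc_snoc[OF h(3) this h(2) h(4)] have "lc P (Inr a) (Inl N) (w1 @ w2)" .
    then show ?thesis using h \<open>w' = u' @ w\<close> der_nt.hyps(3)
      by (intro exI[of _ 0] exI[of _ "w1 @ w2"] exI[of _ w]) (auto intro: derives.der_nil)
  qed
qed

lemma derives_first_iff:
  "derives P xs (a # w) \<longleftrightarrow> (\<exists>i w1 w2. i < length xs \<and> derives P (take i xs) [] \<and>
     lc P (Inr a) (xs ! i) w1 \<and> derives P (drop (Suc i) xs) w2 \<and> w = w1 @ w2)"
proof
  assume "derives P xs (a # w)" then show "\<exists>i w1 w2. i < length xs \<and> derives P (take i xs) [] \<and>
     lc P (Inr a) (xs ! i) w1 \<and> derives P (drop (Suc i) xs) w2 \<and> w = w1 @ w2"
    using lc_first[of P xs "a # w" a w] by blast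
next
  assume "\<exists>i w1 w2. i < length xs \<and> derives P (take i xs) [] \<and>
     lc P (Inr a) (xs ! i) w1 \<and> derives P (drop (Suc i) xs) w2 \<and> w = w1 @ w2"
  then obtain i w1 w2 where h: "i < length xs" "derives P (take i xs) []"
     "lc P (Inr a) (xs ! i) w1" "derives P (drop (Suc i) xs) w2" "w = w1 @ w2" by blast
  have "derives P [Inr a] [a]" by (simp add: derives_single_Inr)
  from lc_derives[OF h(3) this] have d1: "derives P [xs ! i] (a # w1)" by simp
  have d2: "derives P ([xs ! i] @ drop (Suc i) xs) ((a # w1) @ w2)"
    using derives_append1[OF d1 h(4)] .
  have d3: "derives P (take i xs @ ([xs ! i] @ drop (Suc i) xs)) ([] @ ((a # w1) @ w2))"
    using derives_append1[OF h(2) d2] .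
  have eq: "take i xs @ ([xs ! i] @ drop (Suc i) xs) = xs"
    using h(1) by (simp add: Cons_nth_drop_Suc)
  show "derives P xs (a # w)" using d3 unfolding eq h(5) by simp
qed

lemma derives_single_first: "derives P [s] (a # w) \<longleftrightarrow> lc P (Inr a) s w"
proof -
  have "derives P [s] (a # w) \<longleftrightarrow> (\<exists>i w1 w2. i < length [s] \<and> derives P (take i [s]) [] \<and>
     lc P (Inr a) ([s] ! i) w1 \<and> derives P (drop (Suc i) [s]) w2 \<and> w = w1 @ w2)"
    by (rule derives_first_iff)
  also have "\<dots> \<longleftrightarrow> lc P (Inr a) s w"
    by (simp add: derives_nil_iff)
  finally show ?thesis .
qed

definition unit1 :: "(nat \<times> (nat + 'a) list) set \<Rightarrow> nat + 'a \<Rightarrow> nat + 'a \<Rightarrow> bool" where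
  "unit1 P s r \<longleftrightarrow> (\<exists>N rhs i. (N, rhs) \<in> P \<and> i < length rhs \<and> rhs ! i = s \<and> r = Inl N \<and>
      derives P (take i rhs) [] \<and> derives P (drop (Suc i) rhs) [])"

lemma lc_inv:
  "lc P z t v \<longleftrightarrow> (z = t \<and> v = []) \<or> (\<exists>N rhs i u v'. (N, rhs) \<in> P \<and> i < length rhs \<and> rhs ! i = z \<and>
      derives P (take i rhs) [] \<and> derives P (drop (Suc i) rhs) u \<and> lc P (Inl N) t v' \<and> v = u @ v')"
proof
  assume "lc P z t v"
  then show "(z = t \<and> v = []) \<or> (\<exists>N rhs i u v'. (N, rhs) \<in> P \<and> i < length rhs \<and> rhs ! i = z \<and>
      derives P (take i rhs) [] \<and> derives P (drop (Suc i) rhs) u \<and> lc P (Inl N) t v' \<and> v = u @ v')"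
  proof (cases rule: lc.cases)
    case lc_refl then show ?thesis by simp
  next
    case (lc_step N al be u v')
    then show ?thesis
      by (intro disjI2 exI[of _ N] exI[of _ "al @ z # be"] exI[of _ "length al"] exI[of _ u] exI[of _ v']) simp
  qed
next
  assume "(z = t \<and> v = []) \<or> (\<exists>N rhs i u v'. (N, rhs) \<in> P \<and> i < length rhs \<and> rhs ! i = z \<and>
      derives P (take i rhs) [] \<and> derives P (drop (Suc i) rhs) u \<and> lc P (Inl N) t v' \<and> v = u @ v')"
  then show "lc P z t v"
  proof
    assume "z = t \<and> v = []" then show ?thesis using lc_refl by simp
  next
    assume "\<exists>N rhs i u v'. (N, rhs) \<in> P \<and> i < length rhs \<and> rhs ! i = z \<and>
      derives P (take i rhs) [] \<and> derives P (drop (Suc i) rhs) u \<and> lc P (Inl N) t v' \<and> v = u @ v'"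
    then obtain N rhs i u v' where h: "(N, rhs) \<in> P" "i < length rhs" "rhs ! i = z"
      "derives P (take i rhs) []" "derives P (drop (Suc i) rhs) u" "lc P (Inl N) t v'" "v = u @ v'"
      by blast
    have "(N, take i rhs @ z # drop (Suc i) rhs) \<in> P"
      using h(1,2) by (simp add: Cons_nth_drop_Suc h(3)[symmetric])
    from lc_step[OF this h(4) h(5) h(6)] show ?thesis using h(7) by simp
  qed
qed

lemma unit_lc: "(unit1 P)\<^sup>*\<^sup>* s r \<Longrightarrow> lc P r t x \<Longrightarrow> lc P s t x"
proof (induction rule: converse_rtranclp_induct)
  case base then show ?case .
next
  case (step s s')
  then obtain N rhs i where h: "(N, rhs) \<in> P" "i < length rhs" "rhs ! i = s" "s' = Inl N"
      "derives P (take i rhs) []" "derives P (drop (Suc i) rhs) []" unfolding unit1_def by blast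
  have "lc P s' t x" using step by blast
  then have "lc P s t ([] @ x)" using lc_inv[of P s t "[] @ x"] h by blast
  then show ?case by simp
qed

lemma lc_UC:
  "lc P s t v \<Longrightarrow> v \<noteq> [] \<Longrightarrow> \<exists>N rhs i u v'. (N, rhs) \<in> P \<and> i < length rhs \<and> (unit1 P)\<^sup>*\<^sup>* s (rhs ! i) \<and>
     derives P (take i rhs) [] \<and> derives P (drop (Suc i) rhs) u \<and> u \<noteq> [] \<and> lc P (Inl N) t v' \<and> v = u @ v'"
proof (induction rule: lc.induct)
  case (lc_refl z) then show ?case by simp
next
  case (lc_step N al z be u t v)
  show ?case
  proof (cases "u = []")
    case False
    then show ?thesis using lc_step.hyps
      by (intro exI[of _ N] exI[of _ "al @ z # be"] exI[of _ "length al"] exI[of _ u] exI[of _ v]) simp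
  next
    case True
    with lc_step.prems have "v \<noteq> []" by simp
    with lc_step.IH obtain N' rhs i u' v' where h: "(N', rhs) \<in> P" "i < length rhs"
      "(unit1 P)\<^sup>*\<^sup>* (Inl N) (rhs ! i)" "derives P (take i rhs) []" "derives P (drop (Suc i) rhs) u'"
      "u' \<noteq> []" "lc P (Inl N') t v'" "v = u' @ v'" by blast
    have "unit1 P z (Inl N)" unfolding unit1_def using lc_step.hyps True
      by (intro exI[of _ N] exI[of _ "al @ z # be"] exI[of _ "length al"]) simp
    then have "(unit1 P)\<^sup>*\<^sup>* z (rhs ! i)" using h(3) by (rule converse_rtranclp_into_rtranclp)
    then show ?thesis using h True
      by (intro exI[of _ N'] exI[of _ rhs] exI[of _ i] exI[of _ u'] exI[of _ v']) simp
  qed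
qed

lemma lc_UC_iff:
  "lc P s t (a # w) \<longleftrightarrow> (\<exists>N rhs i u' v'. (N, rhs) \<in> P \<and> i < length rhs \<and> (unit1 P)\<^sup>*\<^sup>* s (rhs ! i) \<and>
     derives P (take i rhs) [] \<and> derives P (drop (Suc i) rhs) (a # u') \<and> lc P (Inl N) t v' \<and> w = u' @ v')"
proof
  assume "lc P s t (a # w)"
  from lc_UC[OF this] obtain N rhs i u v' where h: "(N, rhs) \<in> P" "i < length rhs"
      "(unit1 P)\<^sup>*\<^sup>* s (rhs ! i)" "derives P (take i rhs) []" "derives P (drop (Suc i) rhs) u"
      "u \<noteq> []" "lc P (Inl N) t v'" "a # w = u @ v'" by blast
  then obtain u' where "u = a # u'" "w = u' @ v'" by (cases u) auto
  then show "\<exists>N rhs i u' v'. (N, rhs) \<in> P \<and> i < length rhs \<and> (unit1 P)\<^sup>*\<^sup>* s (rhs ! i) \<and>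
     derives P (take i rhs) [] \<and> derives P (drop (Suc i) rhs) (a # u') \<and> lc P (Inl N) t v' \<and> w = u' @ v'"
    using h by blast
next
  assume "\<exists>N rhs i u' v'. (N, rhs) \<in> P \<and> i < length rhs \<and> (unit1 P)\<^sup>*\<^sup>* s (rhs ! i) \<and>
     derives P (take i rhs) [] \<and> derives P (drop (Suc i) rhs) (a # u') \<and> lc P (Inl N) t v' \<and> w = u' @ v'"
  then obtain N rhs i u' v' where h: "(N, rhs) \<in> P" "i < length rhs" "(unit1 P)\<^sup>*\<^sup>* s (rhs ! i)"
     "derives P (take i rhs) []" "derives P (drop (Suc i) rhs) (a # u')" "lc P (Inl N) t v'" "w = u' @ v'"
    by blast
  have "lc P (rhs ! i) t ((a # u') @ v')"
    using lc_inv[of P "rhs ! i" t "(a # u') @ v'"] h(1,2,4,5,6) by blast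
  from unit_lc[OF h(3) this] show "lc P s t (a # w)" using h(7) by simp
qed

datatype 'a item = ItG "nat + 'a" | ItC "nat + 'a" "nat + 'a"

fun ilang :: "(nat \<times> (nat + 'a) list) set \<Rightarrow> 'a item \<Rightarrow> 'a list set" where
  "ilang P (ItG s) = {w. w \<noteq> [] \<and> derives P [s] w}"
| "ilang P (ItC s t) = {w. w \<noteq> [] \<and> lc P s t w}"

definition conc :: "'a list set \<Rightarrow> 'a list set \<Rightarrow> 'a list set" where
  "conc A B = {u @ v | u v. u \<in> A \<and> v \<in> B}"

fun lang :: "(nat \<times> (nat + 'a) list) set \<Rightarrow> 'a item list \<Rightarrow> 'a list set" where
  "lang P [] = {[]}"
| "lang P (g # d) = conc (ilang P g) (lang P d)"

definition syms :: "(nat \<times> (nat + 'a) list) set \<Rightarrow> nat \<Rightarrow> (nat + 'a) set" where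
  "syms P S = insert (Inl S) (range Inr \<union> Inl ` fst ` P \<union> (\<Union>p\<in>P. set (snd p)))"

definition items :: "(nat \<times> (nat + 'a) list) set \<Rightarrow> nat \<Rightarrow> 'a item set" where
  "items P S = ItG ` syms P S \<union> (\<lambda>(x, y). ItC x y) ` (syms P S \<times> syms P S)"

definition rep :: "(nat \<times> (nat + 'a) list) set \<Rightarrow> nat \<Rightarrow> 'a list set \<Rightarrow> bool" where
  "rep P S K \<longleftrightarrow> (\<exists>D. finite D \<and> D \<subseteq> lists (items P S) \<and> K = (\<Union>d\<in>D. lang P d))"

lemma conc_eps_right[simp]: "conc A {[]} = A" by (auto simp: conc_def)
lemma conc_eps_left[simp]: "conc {[]} A = A" by (auto simp: conc_def)
lemma conc_assoc: "conc (conc A B) E = conc A (conc B E)"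
  unfolding conc_def by (auto, metis append_assoc, metis append_assoc)
lemma conc_Un_left: "conc (A \<union> B) E = conc A E \<union> conc B E" by (auto simp: conc_def)
lemma conc_UN_left: "conc (\<Union>x\<in>I. A x) E = (\<Union>x\<in>I. conc (A x) E)" by (auto simp: conc_def)
lemma conc_UN_right: "conc E (\<Union>x\<in>I. A x) = (\<Union>x\<in>I. conc E (A x))" by (auto simp: conc_def)

lemma lang_append: "lang P (d1 @ d2) = conc (lang P d1) (lang P d2)"
  by (induction d1) (auto simp: conc_assoc)

lemma finite_syms: "finite P \<Longrightarrow> finite (syms (P :: (nat \<times> (nat + 'a::finite) list) set) S)"
  unfolding syms_def by auto

lemma finite_items: "finite P \<Longrightarrow> finite (items (P :: (nat \<times> (nat + 'a::finite) list) set) S)"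
  unfolding items_def using finite_syms by blast

lemma rep_empty: "rep P S {}"
  unfolding rep_def by (intro exI[of _ "{}"]) simp

lemma rep_eps: "rep P S {[]}"
  unfolding rep_def by (intro exI[of _ "{[]}"]) simp

lemma rep_item: "g \<in> items P S \<Longrightarrow> rep P S (ilang P g)"
  unfolding rep_def by (intro exI[of _ "{[g]}"]) simp

lemma rep_Un: "rep P S A \<Longrightarrow> rep P S B \<Longrightarrow> rep P S (A \<union> B)"
  unfolding rep_def
proof (elim exE conjE)
  fix D1 D2 assume "finite D1" "D1 \<subseteq> lists (items P S)" "A = (\<Union>d\<in>D1. lang P d)"
    "finite D2" "D2 \<subseteq> lists (items P S)" "B = (\<Union>d\<in>D2. lang P d)"
  then show "\<exists>D. finite D \<and> D \<subseteq> lists (items P S) \<and> A \<union> B = (\<Union>d\<in>D. lang P d)"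
    by (intro exI[of _ "D1 \<union> D2"]) auto
qed

lemma rep_UN: "finite I \<Longrightarrow> (\<And>x. x \<in> I \<Longrightarrow> rep P S (A x)) \<Longrightarrow> rep P S (\<Union>x\<in>I. A x)"
  by (induction I rule: finite_induct) (auto intro: rep_Un rep_empty)

lemma rep_if: "(b \<Longrightarrow> rep P S A) \<Longrightarrow> rep P S (if b then A else {})"
  by (auto intro: rep_empty)

lemma rep_conc: "rep P S A \<Longrightarrow> rep P S B \<Longrightarrow> rep P S (conc A B)"
  unfolding rep_def
proof (elim exE conjE)
  fix D1 D2 assume h: "finite D1" "D1 \<subseteq> lists (items P S)" "A = (\<Union>d\<in>D1. lang P d)"
    "finite D2" "D2 \<subseteq> lists (items P S)" "B = (\<Union>d\<in>D2. lang P d)"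
  define D where "D = (\<Union>d1\<in>D1. (\<lambda>d2. d1 @ d2) ` D2)"
  have "conc A B = (\<Union>d1\<in>D1. \<Union>d2\<in>D2. lang P (d1 @ d2))"
    unfolding h(3,6) conc_UN_left conc_UN_right lang_append by (rule SUP_commute)
  also have "\<dots> = (\<Union>d\<in>D. lang P d)"
    unfolding D_def by (simp add: UN_UN_flatten)
  finally have "conc A B = (\<Union>d\<in>D. lang P d)" .
  moreover have "finite D" unfolding D_def using h(1,4) by simp
  moreover have "D \<subseteq> lists (items P S)" unfolding D_def using h(2,5) by (force simp: subset_iff)
  ultimately show "\<exists>D. finite D \<and> D \<subseteq> lists (items P S) \<and> conc A B = (\<Union>d\<in>D. lang P d)"
    by blast
qed

lemma rep_cong: "A = B \<Longrightarrow> rep P S A \<Longrightarrow> rep P S B" by simp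

lemma rep_sym: "s \<in> syms P S \<Longrightarrow> rep P S {w. derives P [s] w}"
proof -
  assume s: "s \<in> syms P S"
  have "{w. derives P [s] w} = ilang P (ItG s) \<union> (if derives P [s] [] then {[]} else {})"
    by (cases "derives P [s] []") fastforce+
  moreover have "ItG s \<in> items P S" unfolding items_def by (rule UnI1, rule imageI, rule s)
  ultimately show ?thesis using rep_Un[OF rep_item rep_if[OF rep_eps]] by metis
qed

lemma rep_lc: "s \<in> syms P S \<Longrightarrow> t \<in> syms P S \<Longrightarrow> rep P S {w. lc P s t w}"
proof -
  assume s: "s \<in> syms P S" "t \<in> syms P S"
  have "{w. lc P s t w} = ilang P (ItC s t) \<union> (if lc P s t [] then {[]} else {})"
    by (cases "lc P s t []") fastforce+
  moreover have "ItC s t \<in> items P S" using s unfolding items_def by force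
  ultimately show ?thesis using rep_Un[OF rep_item rep_if[OF rep_eps]] by metis
qed

lemma rep_word: "set b \<subseteq> syms P S \<Longrightarrow> rep P S {w. derives P b w}"
proof (induction b)
  case Nil then show ?case using rep_eps[of P S] by (simp add: derives_nil_iff)
next
  case (Cons s b)
  have "{w. derives P (s # b) w} = conc {w. derives P [s] w} {w. derives P b w}"
    by (auto simp: conc_def derives_cons_iff[of P s b])
  then show ?case using Cons by (auto intro!: rep_conc rep_sym)
qed

lemma rhs_syms: "p \<in> P \<Longrightarrow> set (snd p) \<subseteq> syms P S"
  unfolding syms_def by blast
lemma lhs_syms: "p \<in> P \<Longrightarrow> Inl (fst p) \<in> syms P S"
  unfolding syms_def by blast
lemma term_syms: "Inr a \<in> syms P S"
  unfolding syms_def by blast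

lemma set_drop_sub: "set (drop i xs) \<subseteq> set xs"
  by (rule set_drop_subset)

lemma rep_lc_term:
  assumes fin: "finite P" and Z: "Z \<in> syms P S"
  shows "rep P S {w. lc P (Inr a) Z w}"
proof -
  have eq: "{w. lc P (Inr a) Z w} = (if Inr a = Z then {[]} else {}) \<union>
     (\<Union>p\<in>P. \<Union>i\<in>{i. i < length (snd p) \<and> snd p ! i = Inr a \<and> derives P (take i (snd p)) []}.
        conc {u. derives P (drop (Suc i) (snd p)) u} {v. lc P (Inl (fst p)) Z v})"
    (is "?L = ?R")
  proof (rule set_eqI, rule iffI)
    fix w assume "w \<in> ?L"
    then have "lc P (Inr a) Z w" by simp
    then consider (r) "Inr a = Z" "w = []"
      | (s) N rhs i u v' where "(N, rhs) \<in> P" "i < length rhs" "rhs ! i = Inr a"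
         "derives P (take i rhs) []" "derives P (drop (Suc i) rhs) u" "lc P (Inl N) Z v'" "w = u @ v'"
      using lc_inv[of P "Inr a" Z w] by blast
    then show "w \<in> ?R"
    proof cases
      case r then show ?thesis by simp
    next
      case s
      have "w \<in> conc {u. derives P (drop (Suc i) (snd (N, rhs))) u} {v. lc P (Inl (fst (N, rhs))) Z v}"
        using s unfolding conc_def by auto
      moreover have "i \<in> {i. i < length (snd (N, rhs)) \<and> snd (N, rhs) ! i = Inr a \<and> derives P (take i (snd (N, rhs))) []}"
        using s by simp
      ultimately show ?thesis using s(1) by (intro UnI2 UN_I[of "(N, rhs)"]) (auto intro: UN_I[of i])
    qed
  next
    fix w assume "w \<in> ?R"
    then consider (r) "Inr a = Z" "w = []"
      | (s) N rhs i u v' where "(N, rhs) \<in> P" "i < length rhs" "rhs ! i = Inr a"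
         "derives P (take i rhs) []" "derives P (drop (Suc i) rhs) u" "lc P (Inl N) Z v'" "w = u @ v'"
      unfolding conc_def by (auto split: if_splits)
    then show "w \<in> ?L"
    proof cases
      case r then show ?thesis by (simp add: lc_refl)
    next
      case s then show ?thesis using lc_inv[of P "Inr a" Z w] by blast
    qed
  qed
  show ?thesis unfolding eq
    apply (intro rep_Un rep_if rep_eps rep_UN fin)
     apply simp
    apply (rule rep_conc)
     apply (rule rep_word)
     apply (meson rhs_syms set_drop_subset subset_trans)
    apply (rule rep_lc)
     apply (erule lhs_syms)
    apply (rule Z)
    done
qed

lemma rep_deriv_term:
  assumes fin: "finite P" and b: "set b \<subseteq> syms P S"
  shows "rep P S {w. derives P b (a # w)}"
proof -
  have eq: "{w. derives P b (a # w)} =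
     (\<Union>i\<in>{i. i < length b \<and> derives P (take i b) []}.
        conc {w1. lc P (Inr a) (b ! i) w1} {w2. derives P (drop (Suc i) b) w2})"
    (is "?L = ?R")
  proof (rule set_eqI, rule iffI)
    fix w assume "w \<in> ?L"
    then obtain i w1 w2 where s: "i < length b" "derives P (take i b) []"
       "lc P (Inr a) (b ! i) w1" "derives P (drop (Suc i) b) w2" "w = w1 @ w2"
      using derives_first_iff[of P b a w] by auto
    have "w \<in> conc {w1. lc P (Inr a) (b ! i) w1} {w2. derives P (drop (Suc i) b) w2}"
      using s unfolding conc_def by auto
    then show "w \<in> ?R" using s by blast
  next
    fix w assume "w \<in> ?R"
    then obtain i w1 w2 where s: "i < length b" "derives P (take i b) []"
       "lc P (Inr a) (b ! i) w1" "derives P (drop (Suc i) b) w2" "w = w1 @ w2"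
      unfolding conc_def by auto
    then show "w \<in> ?L" using derives_first_iff[of P b a w] by auto
  qed
  show ?thesis unfolding eq
    apply (intro rep_UN)
     apply simp
    apply (rule rep_conc)
     apply (rule rep_lc_term[OF fin])
     apply (use b in auto)[1]
    apply (rule rep_word)
    apply (meson b set_drop_subset subset_trans)
    done
qed

lemma rep_lc_quot:
  assumes fin: "finite P" and st: "s \<in> syms P S" "t \<in> syms P S"
  shows "rep P S {w. lc P s t (a # w)}"
proof -
  have eq: "{w. lc P s t (a # w)} =
     (\<Union>p\<in>P. \<Union>i\<in>{i. i < length (snd p) \<and> (unit1 P)\<^sup>*\<^sup>* s (snd p ! i) \<and> derives P (take i (snd p)) []}.
        conc {u. derives P (drop (Suc i) (snd p)) (a # u)} {v. lc P (Inl (fst p)) t v})"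
    (is "?L = ?R")
  proof (rule set_eqI, rule iffI)
    fix w assume "w \<in> ?L"
    then obtain N rhs i u' v' where h: "(N, rhs) \<in> P" "i < length rhs" "(unit1 P)\<^sup>*\<^sup>* s (rhs ! i)"
     "derives P (take i rhs) []" "derives P (drop (Suc i) rhs) (a # u')" "lc P (Inl N) t v'" "w = u' @ v'"
      using lc_UC_iff[of P s t a w] by auto
    have "w \<in> conc {u. derives P (drop (Suc i) (snd (N, rhs))) (a # u)} {v. lc P (Inl (fst (N, rhs))) t v}"
      using h unfolding conc_def by auto
    moreover have "i \<in> {i. i < length (snd (N, rhs)) \<and> (unit1 P)\<^sup>*\<^sup>* s (snd (N, rhs) ! i) \<and> derives P (take i (snd (N, rhs))) []}"
      using h by simp
    ultimately show "w \<in> ?R" using h(1) by (intro UN_I[of "(N, rhs)"]) (auto intro: UN_I[of i])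
  next
    fix w assume "w \<in> ?R"
    then obtain N rhs i u' v' where h: "(N, rhs) \<in> P" "i < length rhs" "(unit1 P)\<^sup>*\<^sup>* s (rhs ! i)"
     "derives P (take i rhs) []" "derives P (drop (Suc i) rhs) (a # u')" "lc P (Inl N) t v'" "w = u' @ v'"
      unfolding conc_def by auto
    then show "w \<in> ?L" using lc_UC_iff[of P s t a w] by blast
  qed
  show ?thesis unfolding eq
    apply (intro rep_UN fin)
     apply simp
    apply (rule rep_conc)
     apply (rule rep_deriv_term[OF fin])
     apply (meson rhs_syms set_drop_subset subset_trans)
    apply (rule rep_lc)
     apply (erule lhs_syms)
    apply (rule st)
    done
qed

lemma rep_quot:
  assumes fin: "finite P" and g: "g \<in> items P S"
  shows "rep P S {w. a # w \<in> ilang P g}"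
proof (cases g)
  case (ItG s)
  then have s: "s \<in> syms P S" using g unfolding items_def by auto
  have "{w. a # w \<in> ilang P g} = {w. lc P (Inr a) s w}"
    using ItG by (simp add: derives_single_first)
  then show ?thesis using rep_lc_term[OF fin s] by simp
next
  case (ItC s t)
  then have st: "s \<in> syms P S" "t \<in> syms P S" using g unfolding items_def by auto
  have "{w. a # w \<in> ilang P g} = {w. lc P s t (a # w)}"
    using ItC by simp
  then show ?thesis using rep_lc_quot[OF fin st] by simp
qed

fun brun :: "nat list \<Rightarrow> paren list \<Rightarrow> nat list option" where
  "brun s [] = Some s"
| "brun s (Op i # u) = brun (i # s) u"
| "brun [] (Cl i # u) = None"
| "brun (j # s) (Cl i # u) = (if i = j then brun s u else None)"

definition obrun :: "nat list option \<Rightarrow> paren list \<Rightarrow> nat list option" where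
  "obrun so v = (case so of None \<Rightarrow> None | Some s \<Rightarrow> brun s v)"

lemma obrun_None[simp]: "obrun None v = None" by (simp add: obrun_def)
lemma obrun_Some[simp]: "obrun (Some s) v = brun s v" by (simp add: obrun_def)

lemma brun_append: "brun s (u @ v) = obrun (brun s u) v"
  by (induction s u rule: brun.induct) auto

lemma dyck_brun: "u \<in> Dyck n \<Longrightarrow> brun s (u @ r) = brun s r"
proof (induction arbitrary: s r rule: Dyck.induct)
  case dyck_nil then show ?case by simp
next
  case (dyck_wrap i u v)
  have "brun s ((Op i # u @ [Cl i]) @ v @ r) = brun (i # s) (u @ (Cl i # v @ r))" by simp
  also have "\<dots> = brun (i # s) (Cl i # v @ r)" by (rule dyck_wrap.IH(1))
  also have "\<dots> = brun s (v @ r)" by simp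
  also have "\<dots> = brun s r" by (rule dyck_wrap.IH(2))
  finally show ?case by simp
qed

lemma dyck_insert:
  assumes "w \<in> Dyck n" "1 \<le> i" "i \<le> n"
  shows "w = x @ y \<Longrightarrow> x @ Op i # Cl i # y \<in> Dyck n"
  using assms(1)
proof (induction arbitrary: x y rule: Dyck.induct)
  case dyck_nil
  then show ?case using dyck_wrap[OF assms(2,3) Dyck.dyck_nil Dyck.dyck_nil] by simp
next
  case (dyck_wrap j u v)
  have wd: "(Op j # u @ [Cl j]) @ v \<in> Dyck n" by (rule Dyck.dyck_wrap[OF dyck_wrap.hyps])
  show ?case
  proof (cases x)
    case Nil
    then show ?thesis using dyck_wrap.prems Dyck.dyck_wrap[OF assms(2,3) Dyck.dyck_nil wd] by simp
  next
    case (Cons c x')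
    with dyck_wrap.prems have c: "c = Op j" and eq: "x' @ y = u @ (Cl j # v)" by auto
    from eq obtain us where "(x' = u @ us \<and> us @ y = Cl j # v) \<or> (x' @ us = u \<and> y = us @ Cl j # v)"
      unfolding append_eq_append_conv2 by blast
    then show ?thesis
    proof
      assume h: "x' = u @ us \<and> us @ y = Cl j # v"
      show ?thesis
      proof (cases us)
        case Nil
        with h have "x' = u" "y = Cl j # v" by auto
        have "u @ Op i # Cl i # [] \<in> Dyck n" using dyck_wrap.IH(1)[of u "[]"] by simp
        from Dyck.dyck_wrap[OF dyck_wrap.hyps(1,2) this dyck_wrap.hyps(4)]
        show ?thesis using Cons c \<open>x' = u\<close> \<open>y = Cl j # v\<close> by simp
      next
        case (Cons c' us')
        with h have "x' = u @ Cl j # us'" "us' @ y = v" by auto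
        have "us' @ Op i # Cl i # y \<in> Dyck n" using dyck_wrap.IH(2)[of us' y] \<open>us' @ y = v\<close> by simp
        from Dyck.dyck_wrap[OF dyck_wrap.hyps(1,2,3) this]
        show ?thesis using \<open>x = c # x'\<close> c \<open>x' = u @ Cl j # us'\<close> by simp
      qed
    next
      assume h: "x' @ us = u \<and> y = us @ Cl j # v"
      have "x' @ Op i # Cl i # us \<in> Dyck n" using dyck_wrap.IH(1)[of x' us] h by simp
      from Dyck.dyck_wrap[OF dyck_wrap.hyps(1,2) this dyck_wrap.hyps(4)]
      show ?thesis using Cons c h by simp
    qed
  qed
qed

lemma brun_dyck: "brun s u = Some [] \<Longrightarrow> u \<in> lists (Omega n) \<Longrightarrow> map Op (rev s) @ u \<in> Dyck n"
proof (induction s u rule: brun.induct)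
  case (1 s) then show ?case by (simp add: Dyck.dyck_nil)
next
  case (2 s i u) then show ?case by simp
next
  case (3 i u) then show ?case by simp
next
  case (4 j s i u)
  then have ij: "i = j" and b: "brun s u = Some []" by (auto split: if_splits)
  have io: "Cl i \<in> Omega n" using "4.prems" by simp
  then have "1 \<le> i" "i \<le> n" unfolding Omega_def by auto
  from "4.IH"[OF ij b] "4.prems" have "map Op (rev s) @ u \<in> Dyck n" by simp
  from dyck_insert[OF this \<open>1 \<le> i\<close> \<open>i \<le> n\<close> refl] show ?case using ij by simp
qed

lemma dyck_iff: "u \<in> lists (Omega n) \<Longrightarrow> u \<in> Dyck n \<longleftrightarrow> brun [] u = Some []"
  using dyck_brun[of u n "[]" "[]"] brun_dyck[of "[]" u n] by auto

definition code :: "nat \<Rightarrow> nat list" where "code k = 2 # replicate k 1 @ [2]"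
definition pushw :: "nat \<Rightarrow> paren list" where "pushw k = map Op (code k)"
definition popw :: "nat \<Rightarrow> paren list" where "popw k = map Cl (code k)"

fun opn :: "('i \<Rightarrow> nat) \<Rightarrow> 'i list \<Rightarrow> paren list" where
  "opn f [] = []"
| "opn f (g # d) = opn f d @ pushw (f g)"

definition enc :: "('i \<Rightarrow> nat) \<Rightarrow> 'i list \<Rightarrow> nat list" where
  "enc f s = concat (map (\<lambda>g. code (f g)) s)"

lemma brun_ops: "brun s (map Op xs) = Some (rev xs @ s)"
  by (induction xs arbitrary: s) auto

lemma rev_code: "rev (code k) = code k" by (simp add: code_def)

lemma brun_opn: "brun st (opn f d) = Some (enc f d @ st)"
  by (induction d arbitrary: st) (simp_all add: enc_def brun_append pushw_def brun_ops rev_code)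

lemma brun_rep: "brun (replicate j 1 @ 2 # st) (replicate k (Cl 1) @ Cl 2 # r) = (if j = k then brun st r else None)"
proof (induction k arbitrary: j)
  case 0 then show ?case by (cases j) auto
next
  case (Suc k) then show ?case by (cases j) auto
qed

lemma brun_pop: "brun (code j @ st) (popw k @ r) = (if j = k then brun st r else None)"
  unfolding code_def popw_def using brun_rep[of j st k r] by simp

lemma brun_pop_nil: "brun [] (popw k @ r) = None"
  by (simp add: popw_def code_def)

lemma enc_Nil_iff: "enc f s = [] \<longleftrightarrow> s = []"
  by (cases s) (auto simp: enc_def code_def)

lemma enc_append: "enc f (d @ s) = enc f d @ enc f s"
  by (simp add: enc_def)

lemma ilang_nonempty: "[] \<notin> ilang P g" by (cases g) auto

lemma nil_lang: "[] \<in> lang P s \<longleftrightarrow> s = []"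
  by (cases s) (auto simp: conc_def ilang_nonempty)

lemma set_opn: "set (opn f d) \<subseteq> {Op 1, Op 2}"
  by (induction d) (auto simp: pushw_def code_def)

lemma set_popw: "set (popw k) \<subseteq> {Cl 1, Cl 2}"
  by (auto simp: popw_def code_def)

fun accB :: "('a \<Rightarrow> nat \<Rightarrow> nat \<Rightarrow> paren list set) \<Rightarrow> (nat \<Rightarrow> paren list set) \<Rightarrow> nat set \<Rightarrow> nat
    \<Rightarrow> nat list option \<Rightarrow> 'a list \<Rightarrow> bool" where
  "accB T Ou X x so [] = (\<exists>v\<in>Ou x. obrun so v = Some [])"
| "accB T Ou X x so (a # w) = (\<exists>y\<in>X. \<exists>v\<in>T a x y. accB T Ou X y (obrun so v) w)"

lemma accB_None: "\<not> accB T Ou X x None w"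
  by (induction w arbitrary: x) auto

lemma machineB:
  assumes injf: "inj_on f I"
    and Dprop: "\<And>g a. g \<in> I \<Longrightarrow> finite (D g a) \<and> D g a \<subseteq> lists I \<and>
        {w. a # w \<in> ilang P g} = (\<Union>d\<in>D g a. lang P d)"
    and T11: "\<And>a. T a 1 1 = (\<Union>g\<in>I. (\<lambda>d. popw (f g) @ opn f d) ` D g a)"
    and T10: "\<And>a. T a 1 0 = {}"
    and X: "X = {0, 1}" and O1: "Ou 1 = {[]}"
  shows "s \<in> lists I \<Longrightarrow> accB T Ou X 1 (Some (enc f s)) w \<longleftrightarrow> w \<in> lang P s"
proof (induction w arbitrary: s)
  case Nil
  then show ?case using O1 by (simp add: enc_Nil_iff nil_lang)
next
  case (Cons a w)
  have "accB T Ou X 1 (Some (enc f s)) (a # w) \<longleftrightarrow>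
      (\<exists>g\<in>I. \<exists>d\<in>D g a. accB T Ou X 1 (brun (enc f s) (popw (f g) @ opn f d)) w)"
    using X T10 T11 by auto
  also have "\<dots> \<longleftrightarrow> a # w \<in> lang P s"
  proof (cases s)
    case Nil
    then show ?thesis by (simp add: enc_def brun_pop_nil accB_None)
  next
    case (Cons g0 s')
    with Cons.prems have g0: "g0 \<in> I" and s': "s' \<in> lists I" by auto
    have "(\<exists>g\<in>I. \<exists>d\<in>D g a. accB T Ou X 1 (brun (enc f s) (popw (f g) @ opn f d)) w)
       \<longleftrightarrow> (\<exists>d\<in>D g0 a. accB T Ou X 1 (Some (enc f (d @ s'))) w)"
    proof
      assume "\<exists>g\<in>I. \<exists>d\<in>D g a. accB T Ou X 1 (brun (enc f s) (popw (f g) @ opn f d)) w"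
      then obtain g d where g: "g \<in> I" "d \<in> D g a" "accB T Ou X 1 (brun (enc f s) (popw (f g) @ opn f d)) w"
        by blast
      have "enc f s = code (f g0) @ enc f s'" using Cons by (simp add: enc_def)
      then have "brun (enc f s) (popw (f g) @ opn f d) = (if f g0 = f g then Some (enc f (d @ s')) else None)"
        by (simp add: brun_pop brun_opn enc_append)
      have "f g0 = f g"
      proof (rule ccontr)
        assume "f g0 \<noteq> f g"
        then have "brun (enc f s) (popw (f g) @ opn f d) = None"
          using \<open>brun (enc f s) (popw (f g) @ opn f d) = _\<close> by simp
        then show False using g(3) accB_None by metis
      qed
      with injf g0 g(1) have "g0 = g" by (auto dest: inj_onD)
      then show "\<exists>d\<in>D g0 a. accB T Ou X 1 (Some (enc f (d @ s'))) w"
        using g \<open>brun (enc f s) (popw (f g) @ opn f d) = _\<close> by auto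
    next
      assume "\<exists>d\<in>D g0 a. accB T Ou X 1 (Some (enc f (d @ s'))) w"
      then obtain d where d: "d \<in> D g0 a" "accB T Ou X 1 (Some (enc f (d @ s'))) w" by blast
      have "enc f s = code (f g0) @ enc f s'" using Cons by (simp add: enc_def)
      then have "brun (enc f s) (popw (f g0) @ opn f d) = Some (enc f (d @ s'))"
        by (simp add: brun_pop brun_opn enc_append)
      then show "\<exists>g\<in>I. \<exists>d\<in>D g a. accB T Ou X 1 (brun (enc f s) (popw (f g) @ opn f d)) w"
        using g0 d by force
    qed
    also have "\<dots> \<longleftrightarrow> (\<exists>d\<in>D g0 a. w \<in> lang P (d @ s'))"
    proof -
      have "\<And>d. d \<in> D g0 a \<Longrightarrow> d @ s' \<in> lists I" using Dprop[OF g0] s' by auto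
      then show ?thesis using Cons.IH by blast
    qed
    also have "\<dots> \<longleftrightarrow> w \<in> conc {w. a # w \<in> ilang P g0} (lang P s')"
      using Dprop[OF g0] by (auto simp: lang_append conc_def)
    also have "\<dots> \<longleftrightarrow> a # w \<in> lang P s"
    proof
      assume "w \<in> conc {w. a # w \<in> ilang P g0} (lang P s')"
      then obtain x y where "w = x @ y" "a # x \<in> ilang P g0" "y \<in> lang P s'" by (auto simp: conc_def)
      then have "a # w = (a # x) @ y" by simp
      then show "a # w \<in> lang P s" using Cons \<open>a # x \<in> ilang P g0\<close> \<open>y \<in> lang P s'\<close>
        unfolding Cons lang.simps conc_def by blast
    next
      assume "a # w \<in> lang P s"
      then obtain x y where h: "a # w = x @ y" "x \<in> ilang P g0" "y \<in> lang P s'"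
        using Cons by (auto simp: conc_def)
      have "x \<noteq> []" using h(2) by (cases g0) auto
      then obtain x' where "x = a # x'" "w = x' @ y" using h(1) by (cases x) auto
      then show "w \<in> conc {w. a # w \<in> ilang P g0} (lang P s')" using h by (auto simp: conc_def)
    qed
    finally show ?thesis .
  qed
  finally show ?case .
qed

lemma sm_mult: "semimodule act \<Longrightarrow> act (r * s) b = act r (act s b)" by (simp add: semimodule_def)
lemma sm_one: "semimodule act \<Longrightarrow> act 1 b = b" by (simp add: semimodule_def)
lemma sm_add_l: "semimodule act \<Longrightarrow> act (r + s) b = act r b + act s b" by (simp add: semimodule_def)
lemma sm_add_r: "semimodule act \<Longrightarrow> act r (b + c) = act r b + act r c" by (simp add: semimodule_def)
lemma sm_zero_l: "semimodule act \<Longrightarrow> act 0 b = 0" by (simp add: semimodule_def)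
lemma sm_zero_r: "semimodule act \<Longrightarrow> act r 0 = 0" by (simp add: semimodule_def)

lemma act_sum_r: "semimodule act \<Longrightarrow> act r (sum f F) = (\<Sum>x\<in>F. act r (f x))"
  by (induction F rule: infinite_finite_induct) (simp_all add: sm_zero_r sm_add_r)

lemma act_sum_l: "semimodule act \<Longrightarrow> act (sum f F) b = (\<Sum>x\<in>F. act (f x) b)"
  by (induction F rule: infinite_finite_induct) (simp_all add: sm_zero_l sm_add_l)

lemma leq_mono: "leqB b c1 \<Longrightarrow> leqB b (c1 + c2)"
  unfolding leqB_def by (metis add.assoc)

lemma leq_sum:
  assumes prime: "\<forall>c1 c2. leqB b1 (c1 + c2) \<longrightarrow> leqB b1 c1 \<or> leqB b1 c2"
    and nz: "\<not> leqB b1 0"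
  shows "finite F \<Longrightarrow> leqB b1 (sum f F) \<longleftrightarrow> (\<exists>x\<in>F. leqB b1 (f x))"
proof (induction F rule: finite_induct)
  case empty then show ?case using nz by simp
next
  case (insert x F)
  have "leqB b1 (sum f (insert x F)) \<longleftrightarrow> leqB b1 (f x + sum f F)" using insert by simp
  also have "\<dots> \<longleftrightarrow> leqB b1 (f x) \<or> leqB b1 (sum f F)"
    using prime leq_mono[of b1 "f x" "sum f F"] leq_mono[of b1 "sum f F" "f x"] by (metis add.commute)
  finally show ?case using insert by auto
qed

lemma traceA:
  fixes act :: "'r::semiring_1 \<Rightarrow> 'b::comm_monoid_add \<Rightarrow> 'b" and \<alpha> :: "paren list \<Rightarrow> 'r"
    and T :: "'a \<Rightarrow> nat \<Rightarrow> nat \<Rightarrow> paren list set"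
  assumes smod: "semimodule act" and morph: "monoid_morph n \<alpha>"
    and dyckb: "\<forall>w\<in>lists (Omega n). leqB b1 (act (\<alpha> w) b0) \<longleftrightarrow> brun [] w = Some []"
    and prime: "\<forall>c1 c2. leqB b1 (c1 + c2) \<longrightarrow> leqB b1 c1 \<or> leqB b1 c2"
    and nz: "\<not> leqB b1 0"
    and finX: "finite X"
    and Tp: "\<And>a x y. finite (T a x y) \<and> T a x y \<subseteq> lists (Omega n)"
    and Op: "\<And>x. finite (Ou x) \<and> Ou x \<subseteq> lists (Omega n)"
    and out_def: "\<And>x. out x = (\<Sum>v\<in>Ou x. act (\<alpha> v) b0)"
    and t_def: "\<And>a x y. t a x y = (\<Sum>v\<in>T a x y. \<alpha> v)"
  shows "u \<in> lists (Omega n) \<Longrightarrow>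
    leqB b1 (act (\<alpha> u) (trace act X out t x w)) \<longleftrightarrow> accB T Ou X x (brun [] u) w"
proof -
  have mm: "\<And>u v. u \<in> lists (Omega n) \<Longrightarrow> v \<in> lists (Omega n) \<Longrightarrow> \<alpha> (u @ v) = \<alpha> u * \<alpha> v"
    using morph unfolding monoid_morph_def by blast
  show "u \<in> lists (Omega n) \<Longrightarrow>
    leqB b1 (act (\<alpha> u) (trace act X out t x w)) \<longleftrightarrow> accB T Ou X x (brun [] u) w"
proof (induction w arbitrary: x u)
  case Nil
  have "act (\<alpha> u) (trace act X out t x []) = (\<Sum>v\<in>Ou x. act (\<alpha> (u @ v)) b0)"
  proof -
    have "act (\<alpha> u) (trace act X out t x []) = (\<Sum>v\<in>Ou x. act (\<alpha> u) (act (\<alpha> v) b0))"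
      by (simp add: out_def act_sum_r[OF smod])
    also have "\<dots> = (\<Sum>v\<in>Ou x. act (\<alpha> (u @ v)) b0)"
    proof (rule sum.cong)
      fix v assume "v \<in> Ou x"
      then have "v \<in> lists (Omega n)" using Op by blast
      then show "act (\<alpha> u) (act (\<alpha> v) b0) = act (\<alpha> (u @ v)) b0"
        using Nil.prems by (simp add: mm sm_mult[OF smod])
    qed simp
    finally show ?thesis .
  qed
  also have "leqB b1 \<dots> \<longleftrightarrow> (\<exists>v\<in>Ou x. leqB b1 (act (\<alpha> (u @ v)) b0))"
    by (rule leq_sum[OF prime nz]) (use Op in blast)
  also have "\<dots> \<longleftrightarrow> (\<exists>v\<in>Ou x. brun [] (u @ v) = Some [])"
  proof (rule bex_cong[OF refl])
    fix v assume "v \<in> Ou x"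
    then have "u @ v \<in> lists (Omega n)" using Op Nil.prems by auto
    then show "leqB b1 (act (\<alpha> (u @ v)) b0) \<longleftrightarrow> brun [] (u @ v) = Some []" using dyckb by blast
  qed
  also have "\<dots> \<longleftrightarrow> accB T Ou X x (brun [] u) []"
    by (simp add: brun_append)
  finally show ?case .
next
  case (Cons a w)
  have "act (\<alpha> u) (trace act X out t x (a # w)) =
      (\<Sum>y\<in>X. \<Sum>v\<in>T a x y. act (\<alpha> (u @ v)) (trace act X out t y w))"
  proof -
    have "act (\<alpha> u) (trace act X out t x (a # w)) =
      (\<Sum>y\<in>X. \<Sum>v\<in>T a x y. act (\<alpha> u) (act (\<alpha> v) (trace act X out t y w)))"
      by (simp add: t_def act_sum_r[OF smod] act_sum_l[OF smod])
    also have "\<dots> = (\<Sum>y\<in>X. \<Sum>v\<in>T a x y. act (\<alpha> (u @ v)) (trace act X out t y w))"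
    proof (rule sum.cong[OF refl], rule sum.cong[OF refl])
      fix y v assume "v \<in> T a x y"
      then have "v \<in> lists (Omega n)" using Tp by blast
      then show "act (\<alpha> u) (act (\<alpha> v) (trace act X out t y w)) = act (\<alpha> (u @ v)) (trace act X out t y w)"
        using Cons.prems by (simp add: mm sm_mult[OF smod])
    qed
    finally show ?thesis .
  qed
  also have "leqB b1 \<dots> \<longleftrightarrow> (\<exists>y\<in>X. \<exists>v\<in>T a x y. leqB b1 (act (\<alpha> (u @ v)) (trace act X out t y w)))"
  proof -
    have "leqB b1 (\<Sum>y\<in>X. \<Sum>v\<in>T a x y. act (\<alpha> (u @ v)) (trace act X out t y w)) \<longleftrightarrow>
       (\<exists>y\<in>X. leqB b1 (\<Sum>v\<in>T a x y. act (\<alpha> (u @ v)) (trace act X out t y w)))"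
      by (rule leq_sum[OF prime nz finX])
    also have "\<dots> \<longleftrightarrow> (\<exists>y\<in>X. \<exists>v\<in>T a x y. leqB b1 (act (\<alpha> (u @ v)) (trace act X out t y w)))"
    proof (rule bex_cong[OF refl])
      fix y show "leqB b1 (\<Sum>v\<in>T a x y. act (\<alpha> (u @ v)) (trace act X out t y w)) \<longleftrightarrow>
         (\<exists>v\<in>T a x y. leqB b1 (act (\<alpha> (u @ v)) (trace act X out t y w)))"
        by (rule leq_sum[OF prime nz]) (use Tp in blast)
    qed
    finally show ?thesis .
  qed
  also have "\<dots> \<longleftrightarrow> (\<exists>y\<in>X. \<exists>v\<in>T a x y. accB T Ou X y (brun [] (u @ v)) w)"
  proof (rule bex_cong[OF refl], rule bex_cong[OF refl])
    fix y v assume "v \<in> T a x y"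
    then have "v \<in> lists (Omega n)" using Tp[of a x y] by blast
    then have "u @ v \<in> lists (Omega n)" using Cons.prems by simp
    then show "leqB b1 (act (\<alpha> (u @ v)) (trace act X out t y w)) \<longleftrightarrow> accB T Ou X y (brun [] (u @ v)) w"
      by (rule Cons.IH)
  qed
  also have "\<dots> \<longleftrightarrow> accB T Ou X x (brun [] u) (a # w)"
    by (simp add: brun_append)
  finally show ?case .
qed
qed

theorem mainTheorem8:
  fixes R0 :: "'r::semiring_1 set"
    and act :: "'r \<Rightarrow> 'b::comm_monoid_add \<Rightarrow> 'b"
    and B0 :: "'b set"
    and n :: nat
    and \<alpha> :: "paren list \<Rightarrow> 'r"
    and b0 b1 :: 'b
    and L :: "'a::finite list set"
  assumes idem: "(1::'r) + 1 = 1"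
    and R0_fin: "finite R0" and R0_gen: "gen_semiring R0 = UNIV"
    and smod: "semimodule act"
    and B0_fin: "finite B0" and B0_gen: "gen_semimodule act B0 = UNIV"
    and n2: "2 \<le> n"
    and morph: "monoid_morph n \<alpha>"
    and dyck: "\<forall>w \<in> lists (Omega n). leqB b1 (act (\<alpha> w) b0) \<longleftrightarrow> w \<in> Dyck n"
    and prime: "\<forall>c1 c2. leqB b1 (c1 + c2) \<longrightarrow> leqB b1 c1 \<or> leqB b1 c2"
    and cf: "cfl L"
  shows "\<exists>X out t x0. finite X \<and> x0 \<in> X \<and>
           (\<forall>a x y. y \<notin> X \<longrightarrow> t a x y = 0) \<and>
           L = {w. leqB b1 (trace act X out t x0 w)}"
proof -
  from cf obtain P S where finP: "finite P" and LP: "L = {w. derives P [Inl S] w}"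
    unfolding cfl_def by blast
  define I where "I = items P S"
  have finI: "finite I" using finite_items[OF finP] unfolding I_def .
  obtain f :: "'a item \<Rightarrow> nat" where injf: "inj_on f I"
    using finite_imp_inj_to_nat_seg[OF finI] by blast
  define D where "D = (\<lambda>g a. SOME D. finite D \<and> D \<subseteq> lists I \<and>
                         {w. a # w \<in> ilang P g} = (\<Union>d\<in>D. lang P d))"
  have Dprop: "finite (D g a) \<and> D g a \<subseteq> lists I \<and> {w. a # w \<in> ilang P g} = (\<Union>d\<in>D g a. lang P d)"
    if "g \<in> I" for g a
  proof -
    have "rep P S {w. a # w \<in> ilang P g}" using rep_quot[OF finP] that unfolding I_def by blast
    then have "\<exists>D. finite D \<and> D \<subseteq> lists I \<and> {w. a # w \<in> ilang P g} = (\<Union>d\<in>D. lang P d)"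
      unfolding rep_def I_def .
    then show ?thesis unfolding D_def by (rule someI_ex)
  qed
  have dyckb: "\<forall>w\<in>lists (Omega n). leqB b1 (act (\<alpha> w) b0) \<longleftrightarrow> brun [] w = Some []"
    using dyck dyck_iff by blast
  have Om: "Op 1 \<in> Omega n" "Op 2 \<in> Omega n" "Cl 1 \<in> Omega n" "Cl 2 \<in> Omega n"
    using n2 unfolding Omega_def by auto
  have nz: "\<not> leqB b1 0"
  proof
    assume "leqB b1 0"
    then have "b1 = 0" unfolding leqB_def by simp
    then have "leqB b1 (act (\<alpha> [Op 1]) b0)" unfolding leqB_def by simp
    moreover have "[Op 1] \<in> lists (Omega n)" using Om by simp
    ultimately have "brun [] [Op 1] = Some []" using dyckb by blast
    then show False by simp
  qed
  define X :: "nat set" where "X = {0, 1}"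
  define T where "T = (\<lambda>(a::'a) (x::nat) (y::nat).
      if x = 0 \<and> y = 1 then opn f ` D (ItG (Inl S)) a
      else if x = 1 \<and> y = 1 then (\<Union>g\<in>I. (\<lambda>d. popw (f g) @ opn f d) ` D g a) else {})"
  define Ou where "Ou = (\<lambda>x::nat. if x = 1 \<or> [] \<in> L then {[]::paren list} else {})"
  define out where "out = (\<lambda>x. \<Sum>v\<in>Ou x. act (\<alpha> v) b0)"
  define t where "t = (\<lambda>a x y. \<Sum>v\<in>T a x y. \<alpha> v)"
  have GS: "ItG (Inl S) \<in> I" unfolding I_def items_def syms_def by simp
  have opn_Om: "opn f d \<in> lists (Omega n)" for d
    using set_opn[of f d] Om by auto
  have popw_Om: "popw k \<in> lists (Omega n)" for k
    using set_popw[of k] Om by auto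
  have Tp: "finite (T a x y) \<and> T a x y \<subseteq> lists (Omega n)" for a x y
  proof -
    have f1: "finite (D g a)" if "g \<in> I" for g using Dprop[OF that] by blast
    have "finite (T a x y)" unfolding T_def using finI f1 GS by auto
    have s1: "xa \<in> set (opn f d) \<Longrightarrow> xa \<in> Omega n" for xa d using opn_Om[of d] by (simp add: in_lists_conv_set)
    have s2: "xa \<in> set (popw k) \<Longrightarrow> xa \<in> Omega n" for xa k using popw_Om[of k] by (simp add: in_lists_conv_set)
    have "T a x y \<subseteq> lists (Omega n)" unfolding T_def using s1 s2 by auto
    moreover note \<open>finite (T a x y)\<close>
    ultimately show ?thesis by blast
  qed
  have Op: "finite (Ou x) \<and> Ou x \<subseteq> lists (Omega n)" for x
    unfolding Ou_def by auto
  have key: "leqB b1 (act (\<alpha> []) (trace act X out t 0 w)) \<longleftrightarrow> accB T Ou X 0 (brun [] []) w" for w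
    by (rule traceA[OF smod morph dyckb prime nz _ Tp Op]) (simp_all add: X_def out_def t_def)
  have B: "s \<in> lists I \<Longrightarrow> accB T Ou X 1 (Some (enc f s)) w \<longleftrightarrow> w \<in> lang P s" for s w
    by (rule machineB[OF injf Dprop]) (simp_all add: T_def X_def Ou_def)
  have acc0: "accB T Ou X 0 (Some []) w \<longleftrightarrow> w \<in> L" for w
  proof (cases w)
    case Nil
    then show ?thesis by (simp add: Ou_def)
  next
    case (Cons a w')
    have "accB T Ou X 0 (Some []) (a # w') \<longleftrightarrow>
        (\<exists>d\<in>D (ItG (Inl S)) a. accB T Ou X 1 (brun [] (opn f d)) w')"
      by (simp add: X_def T_def)
    also have "\<dots> \<longleftrightarrow> (\<exists>d\<in>D (ItG (Inl S)) a. w' \<in> lang P d)"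
    proof (rule bex_cong[OF refl])
      fix d assume "d \<in> D (ItG (Inl S)) a"
      then have "d \<in> lists I" using Dprop[OF GS] by blast
      then show "accB T Ou X 1 (brun [] (opn f d)) w' \<longleftrightarrow> w' \<in> lang P d"
        using B[of d w'] by (simp add: brun_opn)
    qed
    also have "\<dots> \<longleftrightarrow> w' \<in> {w. a # w \<in> ilang P (ItG (Inl S))}"
      using Dprop[OF GS, of a] by blast
    also have "\<dots> \<longleftrightarrow> a # w' \<in> L" by (simp add: LP)
    finally show ?thesis using Cons by simp
  qed
  have main: "L = {w. leqB b1 (trace act X out t 0 w)}"
  proof -
    have "\<alpha> [] = 1" using morph unfolding monoid_morph_def by blast
    then have "leqB b1 (trace act X out t 0 w) \<longleftrightarrow> w \<in> L" for w
      using key[of w] acc0[of w] sm_one[OF smod] by simp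
    then show ?thesis by blast
  qed
  have t0: "\<forall>a x y. y \<notin> X \<longrightarrow> t a x y = 0"
    unfolding t_def T_def X_def by auto
  show ?thesis
    by (intro exI[of _ X] exI[of _ out] exI[of _ t] exI[of _ 0]) (simp add: X_def t0[unfolded X_def] main[unfolded X_def])
qed

end
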